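(* Let $p$ be an odd prime and $b,c\in\mathbb Z$. For every integer $k$ with $-p\le k\le p$, $$(k+1)\binom{p-1}{k-1}_{b,c}-(k-1)c\binom{p-1}{k+1}_{b,c}\equiv \binom{p}{k}_{b,c}-(b^2-4c)\binom{p-2}{k}_{b,c}\pmod p.$$
   Context: For $n\in\mathbb N$ and $b,c\in\mathbb Z$, the generalized trinomial coefficients $\binom{n}{k}_{b,c}$ ($k\in\mathbb Z$) are the integers defined by $\left(x+b+\frac{c}{x}\right)^n=\sum_{k\in\mathbb Z}\binom{n}{k}_{b,c}x^k$; they vanish for $|k|>n$. *)

theory Defs
  imports "HOL-Computational_Algebra.Formal_Laurent_Series" "HOL-Number_Theory.Cong"
begin

definition gtrinom :: "nat \<Rightarrow> int \<Rightarrow> int \<Rightarrow> int \<Rightarrow> int" where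
  "gtrinom n k b c = fls_nth ((fls_X + fls_const b + fls_const c * fls_X_inv) ^ n) k"

end

theory Submission
  imports Defs
begin

lemma gt0: "gtrinom 0 k b c = (if k = 0 then 1 else 0)"
  by (simp add: gtrinom_def)

lemma gtSuc: "gtrinom (Suc n) k b c = gtrinom n (k-1) b c + b * gtrinom n k b c + c * gtrinom n (k+1) b c"
proof -
  let ?g = "(fls_X + fls_const b + fls_const c * fls_X_inv) ^ n :: int fls"
  have "(fls_X + fls_const b + fls_const c * fls_X_inv) ^ Suc n
        = fls_X * ?g + fls_const b * ?g + fls_const c * (fls_X_inv * ?g)"
    by (simp add: algebra_simps)
  then show ?thesis
    by (simp add: gtrinom_def fls_X_times_conv_shift fls_X_inv_times_conv_shift)
qed

lemma Rrel: "(k-1-int m) * gtrinom m (k-1) b c + b*k*gtrinom m k b c + c*(k+1+int m)*gtrinom m (k+1) b c = 0"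
proof (induction m arbitrary: k)
  case 0
  then show ?case by (simp add: gt0)
next
  case (Suc m)
  have a: "(k-1-1-int m) * gtrinom m (k-1-1) b c + b*(k-1)*gtrinom m (k-1) b c + c*(k-1+1+int m)*gtrinom m (k-1+1) b c = 0"
    using Suc.IH[of "k-1"] .
  have bb: "(k-1-int m) * gtrinom m (k-1) b c + b*k*gtrinom m k b c + c*(k+1+int m)*gtrinom m (k+1) b c = 0"
    using Suc.IH[of "k"] .
  have cc: "(k+1-1-int m) * gtrinom m (k+1-1) b c + b*(k+1)*gtrinom m (k+1) b c + c*(k+1+1+int m)*gtrinom m (k+1+1) b c = 0"
    using Suc.IH[of "k+1"] .
  have e: "(k-1-int (Suc m)) * gtrinom (Suc m) (k-1) b c + b*k*gtrinom (Suc m) k b c + c*(k+1+int (Suc m))*gtrinom (Suc m) (k+1) b c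
     = ((k-1-1-int m) * gtrinom m (k-1-1) b c + b*(k-1)*gtrinom m (k-1) b c + c*(k-1+1+int m)*gtrinom m (k-1+1) b c)
     + b * ((k-1-int m) * gtrinom m (k-1) b c + b*k*gtrinom m k b c + c*(k+1+int m)*gtrinom m (k+1) b c)
     + c * ((k+1-1-int m) * gtrinom m (k+1-1) b c + b*(k+1)*gtrinom m (k+1) b c + c*(k+1+1+int m)*gtrinom m (k+1+1) b c)"
    by (simp add: gtSuc algebra_simps)
  show ?case using a bb cc e by simp
qed

lemma ident:
  fixes m :: nat and b c k :: int
  defines "T \<equiv> \<lambda>n j. gtrinom n j b c"
  shows "(k + 1) * T (m+1) (k - 1) - (k - 1) * c * T (m+1) (k + 1)
        - (T (m+2) k - (b^2 - 4 * c) * T m k)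
        = int (m+2) * (T (m+2) k - 2*b*T (m+1) k + (b^2-4*c) * T m k)"
proof -
  have a: "(k-1-1-int m) * T m (k-1-1) + b*(k-1)*T m (k-1) + c*(k-1+1+int m)*T m (k-1+1) = 0"
    using Rrel[of "k-1" m b c] unfolding T_def .
  have bb: "(k-1-int m) * T m (k-1) + b*k*T m k + c*(k+1+int m)*T m (k+1) = 0"
    using Rrel[of "k" m b c] unfolding T_def .
  have cc: "(k+1-1-int m) * T m (k+1-1) + b*(k+1)*T m (k+1) + c*(k+1+1+int m)*T m (k+1+1) = 0"
    using Rrel[of "k+1" m b c] unfolding T_def .
  have s1: "\<And>j. T (m+1) j = T m (j-1) + b * T m j + c * T m (j+1)"
    unfolding T_def by (simp add: gtSuc)
  have s2: "\<And>j. T (m+2) j = T (m+1) (j-1) + b * T (m+1) j + c * T (m+1) (j+1)"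
    unfolding T_def by (simp add: gtSuc)
  have e: "(k + 1) * T (m+1) (k - 1) - (k - 1) * c * T (m+1) (k + 1)
        - (T (m+2) k - (b^2 - 4 * c) * T m k)
        - int (m+2) * (T (m+2) k - 2*b*T (m+1) k + (b^2-4*c) * T m k)
      = ((k-1-1-int m) * T m (k-1-1) + b*(k-1)*T m (k-1) + c*(k-1+1+int m)*T m (k-1+1))
        - c * ((k+1-1-int m) * T m (k+1-1) + b*(k+1)*T m (k+1) + c*(k+1+1+int m)*T m (k+1+1))"
    unfolding s2 s1 by (simp add: algebra_simps power2_eq_square)
  show ?thesis using a cc e by simp
qed

theorem mainTheorem8:
  fixes p :: nat and b c k :: int
  assumes "prime p" and "odd p" and "- int p \<le> k" and "k \<le> int p"
  shows "[(k + 1) * gtrinom (p - 1) (k - 1) b c - (k - 1) * c * gtrinom (p - 1) (k + 1) b c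
          = gtrinom p k b c - (b^2 - 4 * c) * gtrinom (p - 2) k b c] (mod int p)"
proof -
  have "p \<ge> 2" using assms(1) prime_ge_2_nat by blast
  then obtain m where pm: "p = m + 2" by (metis add.commute le_add_diff_inverse)
  show ?thesis
    unfolding cong_iff_dvd_diff pm
    using ident[of k m b c] by (simp add: add.commute)
qed

end
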